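(* Let $G$ be a connected graph and $\varphi$ a $\mathbb{T}$-gain on $G$ such that $\varphi(\overrightarrow{E}(G))\subseteq\{a+ib\in\mathbb{T}:a\ge0\}$. Then $\lambda_1(A(\Phi))\le\rho(A(\Phi))\le3\lambda_1(A(\Phi))$, where $\Phi=(G,\varphi)$.
   Context: Graphs are finite, simple and undirected. $\mathbb{T}=\{z\in\mathbb{C}:|z|=1\}$. $\overrightarrow{E}(G)$ is the set of oriented edges ($\overrightarrow{e_{st}}$ and $\overrightarrow{e_{ts}}$ for each edge $e_{st}$). A $\mathbb{T}$-gain on $G$ is a map $\varphi:\overrightarrow{E}(G)\to\mathbb{T}$ with $\varphi(\overrightarrow{e_{ts}})=\varphi(\overrightarrow{e_{st}})^{-1}$. $A(\Phi)$ is the Hermitian matrix with $(s,t)$ entry $\varphi(\overrightarrow{e_{st}})$ if $v_s\sim v_t$, else $0$. $\lambda_1$ denotes the largest eigenvalue and $\rho$ the spectral radius. *)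

theory Defs
  imports "Jordan_Normal_Form.Spectral_Radius"
begin

definition simple_graph :: "nat \<Rightarrow> (nat \<Rightarrow> nat \<Rightarrow> bool) \<Rightarrow> bool" where
  "simple_graph n E \<longleftrightarrow>
     (\<forall>s t. E s t \<longrightarrow> s < n \<and> t < n) \<and>
     (\<forall>s t. E s t \<longrightarrow> E t s) \<and>
     (\<forall>s. \<not> E s s)"

definition connected_graph :: "nat \<Rightarrow> (nat \<Rightarrow> nat \<Rightarrow> bool) \<Rightarrow> bool" where
  "connected_graph n E \<longleftrightarrow> simple_graph n E \<and> n > 0 \<and>
     (\<forall>u v. u < n \<longrightarrow> v < n \<longrightarrow> E\<^sup>*\<^sup>* u v)"

text \<open>A T-gain: phi s t is the gain of the oriented edge from s to t.\<close>
definition T_gain :: "(nat \<Rightarrow> nat \<Rightarrow> bool) \<Rightarrow> (nat \<Rightarrow> nat \<Rightarrow> complex) \<Rightarrow> bool" where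
  "T_gain E \<phi> \<longleftrightarrow> (\<forall>s t. E s t \<longrightarrow> norm (\<phi> s t) = 1 \<and> \<phi> t s = inverse (\<phi> s t))"

definition gain_adj :: "nat \<Rightarrow> (nat \<Rightarrow> nat \<Rightarrow> bool) \<Rightarrow> (nat \<Rightarrow> nat \<Rightarrow> complex) \<Rightarrow> complex mat" where
  "gain_adj n E \<phi> = mat n n (\<lambda>(s, t). if E s t then \<phi> s t else 0)"

text \<open>Largest (real) eigenvalue of a complex matrix (meaningful for Hermitian matrices).\<close>
definition lambda1 :: "complex mat \<Rightarrow> real" where
  "lambda1 A = Max {x :: real. eigenvalue A (complex_of_real x)}"

end

theory Submission imports Defs "HOL-Analysis.Analysis" begin

definition Bf :: "nat \<Rightarrow> (nat\<Rightarrow>nat\<Rightarrow>complex) \<Rightarrow> (nat\<Rightarrow>complex) \<Rightarrow> (nat\<Rightarrow>complex) \<Rightarrow> complex" where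
  "Bf n a y z = (\<Sum>s<n. \<Sum>t<n. cnj (y s) * a s t * z t)"
definition nrm :: "nat \<Rightarrow> (nat\<Rightarrow>complex) \<Rightarrow> real" where
  "nrm n y = (\<Sum>s<n. (cmod (y s))^2)"

lemma cont_Bf: "continuous_on UNIV (\<lambda>y. Re (Bf n a y y))"
  unfolding Bf_def
  by (intro continuous_intros continuous_on_product_coordinates)

lemma cont_nrm: "continuous_on UNIV (\<lambda>y. nrm n y)"
  unfolding nrm_def
  by (intro continuous_intros continuous_on_product_coordinates)

lemma compact_K: "compact ({y::nat\<Rightarrow>complex. \<forall>i. y i \<in> (if i<n then cball 0 1 else {0})} \<inter> {y. nrm n y = 1})"
proof (rule compact_Int_closed)
  have "compactin (product_topology (\<lambda>_. euclidean) UNIV) (PiE UNIV (\<lambda>i::nat. if i<n then cball (0::complex) 1 else {0}))"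
    by (subst compactin_PiE) auto
  then have "compact (PiE UNIV (\<lambda>i::nat. if i<n then cball (0::complex) 1 else {0}))"
    by (simp add: euclidean_product_topology)
  moreover have "PiE UNIV (\<lambda>i::nat. if i<n then cball (0::complex) 1 else {0}) = {y::nat\<Rightarrow>complex. \<forall>i. y i \<in> (if i<n then cball 0 1 else {0})}"
    by (simp add: PiE_UNIV_domain Pi_def)
  ultimately show "compact {y::nat\<Rightarrow>complex. \<forall>i. y i \<in> (if i<n then cball 0 1 else {0})}" by simp
  show "closed {y. nrm n y = 1}"
    by (rule closed_Collect_eq[OF cont_nrm]) simp
qed

lemma Bf_cong: "(\<And>i. i<n \<Longrightarrow> y i = y' i) \<Longrightarrow> (\<And>i. i<n \<Longrightarrow> z i = z' i) \<Longrightarrow> Bf n a y z = Bf n a y' z'"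
  unfolding Bf_def by (intro sum.cong refl) auto

lemma nrm_cong: "(\<And>i. i<n \<Longrightarrow> y i = y' i) \<Longrightarrow> nrm n y = nrm n y'"
  unfolding nrm_def by (intro sum.cong refl) auto

lemma Bf_scale: "Bf n a (\<lambda>i. c * y i) (\<lambda>i. d * z i) = cnj c * d * Bf n a y z"
  unfolding Bf_def by (simp add: sum_distrib_left mult_ac)

lemma nrm_scale: "nrm n (\<lambda>i. c * y i) = (cmod c)^2 * nrm n y"
  unfolding nrm_def by (simp add: sum_distrib_left norm_mult power_mult_distrib)

lemma nrm_nonneg: "nrm n y \<ge> 0" unfolding nrm_def by (intro sum_nonneg) auto

lemma nrm_zero: "nrm n y = 0 \<Longrightarrow> i < n \<Longrightarrow> y i = 0"
  unfolding nrm_def by (subst (asm) sum_nonneg_eq_0_iff) auto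

lemma nrm_ge: "i < n \<Longrightarrow> (cmod (y i))^2 \<le> nrm n y"
  unfolding nrm_def by (rule member_le_sum) auto

lemma Bf_zero: "(\<And>i. i<n \<Longrightarrow> y i = 0) \<Longrightarrow> Bf n a y y = 0"
  unfolding Bf_def by simp

lemma exists_max:
  assumes n: "n > 0"
  shows "\<exists>v. nrm n v = 1 \<and> (\<forall>y. Re (Bf n a y y) \<le> Re (Bf n a v v) * nrm n y)"
proof -
  define K where "K = {y::nat\<Rightarrow>complex. \<forall>i. y i \<in> (if i<n then cball 0 1 else {0})} \<inter> {y. nrm n y = 1}"
  have cK: "compact K" unfolding K_def by (rule compact_K)
  define e0 where "e0 = (\<lambda>i::nat. if i = 0 then (1::complex) else 0)"
  have "(\<lambda>s. (cmod (e0 s))^2) = (\<lambda>s. if s = 0 then 1 else 0)" by (auto simp: e0_def)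
  have "nrm n e0 = (\<Sum>s<n. if s = 0 then 1 else 0)" unfolding nrm_def by (rule sum.cong) (auto simp: e0_def)
  also have "\<dots> = 1" using n by simp
  finally have "nrm n e0 = 1" .
  hence "e0 \<in> K" unfolding K_def e0_def using n by auto
  hence ne: "K \<noteq> {}" by auto
  have cont: "continuous_on K (\<lambda>y. Re (Bf n a y y))"
    using cont_Bf continuous_on_subset by blast
  obtain v where vK: "v \<in> K" and vmax: "\<And>t. t \<in> K \<Longrightarrow> Re (Bf n a t t) \<le> Re (Bf n a v v)"
    using continuous_attains_sup[OF cK ne cont] by blast
  have "Re (Bf n a y y) \<le> Re (Bf n a v v) * nrm n y" for y
  proof (cases "nrm n y = 0")
    case True
    then show ?thesis using Bf_zero[of n y a] nrm_zero[OF True] by simp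
  next
    case False
    hence pos: "nrm n y > 0" using nrm_nonneg[of n y] by linarith
    define c where "c = sqrt (nrm n y)"
    have c: "c > 0" "c^2 = nrm n y" using pos unfolding c_def by auto
    define y' where "y' = (\<lambda>i. if i < n then complex_of_real (1/c) * y i else 0)"
    have n1: "nrm n y' = (cmod (complex_of_real (1/c)))^2 * nrm n y"
      unfolding nrm_scale[symmetric] by (rule nrm_cong) (simp add: y'_def)
    also have "\<dots> = 1" using c(1) by (simp add: c(2)[symmetric] norm_divide power_divide)
    finally have n1: "nrm n y' = 1" .
    have "y' \<in> K" unfolding K_def
    proof (intro IntI CollectI allI)
      fix i show "y' i \<in> (if i < n then cball 0 1 else {0})"
      proof (cases "i < n")
        case True
        have "(cmod (y' i))^2 \<le> 1" using nrm_ge[OF True, of y'] n1 by simp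
        hence "cmod (y' i) \<le> 1" by (simp add: power_le_one_iff)
        then show ?thesis using True by (simp add: dist_norm)
      qed (simp add: y'_def)
    qed (fact n1)
    hence le: "Re (Bf n a y' y') \<le> Re (Bf n a v v)" by (rule vmax)
    have "Bf n a y' y' = cnj (complex_of_real (1/c)) * complex_of_real (1/c) * Bf n a y y"
      unfolding Bf_scale[symmetric] by (rule Bf_cong) (simp_all add: y'_def)
    hence "Re (Bf n a y' y') = Re (Bf n a y y) / c^2" by (simp add: power2_eq_square)
    with le c pos show ?thesis by (simp add: divide_le_eq mult.commute)
  qed
  moreover have "nrm n v = 1" using vK unfolding K_def by auto
  ultimately show ?thesis by blast
qed

definition ip :: "nat \<Rightarrow> (nat\<Rightarrow>complex) \<Rightarrow> (nat\<Rightarrow>complex) \<Rightarrow> complex" where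
  "ip n y z = (\<Sum>s<n. cnj (y s) * z s)"

lemma Bf_add: "Bf n a (\<lambda>i. y i + z i) (\<lambda>i. y i + z i) = Bf n a y y + Bf n a y z + Bf n a z y + Bf n a z z"
  unfolding Bf_def by (simp add: algebra_simps sum.distrib)

lemma Bf_herm:
  assumes herm: "\<And>s t. a t s = cnj (a s t)"
  shows "Bf n a z y = cnj (Bf n a y z)"
proof -
  have "cnj (Bf n a y z) = (\<Sum>s<n. \<Sum>t<n. y s * a t s * cnj (z t))"
    unfolding Bf_def by (simp add: herm[symmetric])
  also have "\<dots> = (\<Sum>t<n. \<Sum>s<n. y s * a t s * cnj (z t))" by (rule sum.swap)
  also have "\<dots> = Bf n a z y" unfolding Bf_def by (simp add: mult_ac)
  finally show ?thesis by simp
qed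

lemma nrm_add: "nrm n (\<lambda>i. y i + z i) = nrm n y + 2 * Re (ip n z y) + nrm n z"
proof -
  have "(cmod (y s + z s))^2 = (cmod (y s))^2 + 2 * Re (cnj (z s) * y s) + (cmod (z s))^2" for s
    unfolding cmod_power2 by (simp add: power2_eq_square algebra_simps)
  thus ?thesis unfolding nrm_def ip_def by (simp add: sum.distrib sum_distrib_left)
qed

lemma ip_scale: "ip n (\<lambda>i. c * y i) z = cnj c * ip n y z"
  unfolding ip_def by (simp add: sum_distrib_left mult_ac)

lemma max_is_eig:
  assumes herm: "\<And>s t. a t s = cnj (a s t)"
    and v1: "nrm n v = 1"
    and vmax: "\<forall>y. Re (Bf n a y y) \<le> Re (Bf n a v v) * nrm n y"
    and s: "s < n"
  shows "(\<Sum>t<n. a s t * v t) = complex_of_real (Re (Bf n a v v)) * v s"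
proof -
  define M where "M = Re (Bf n a v v)"
  define w where "w = (\<lambda>s. (\<Sum>t<n. a s t * v t) - complex_of_real M * v s)"
  have key: "Bf n a w v - complex_of_real M * ip n w v = complex_of_real (nrm n w)"
  proof -
    have "Bf n a w v = (\<Sum>s<n. cnj (w s) * (\<Sum>t<n. a s t * v t))"
      unfolding Bf_def by (simp add: sum_distrib_left mult_ac)
    hence "Bf n a w v - complex_of_real M * ip n w v = (\<Sum>s<n. cnj (w s) * ((\<Sum>t<n. a s t * v t) - complex_of_real M * v s))"
      unfolding ip_def by (simp add: sum_distrib_left sum_subtractf right_diff_distrib mult_ac)
    also have "\<dots> = (\<Sum>s<n. cnj (w s) * w s)" unfolding w_def ..
    also have "\<dots> = (\<Sum>s<n. complex_of_real ((cmod (w s))^2))"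
      by (intro sum.cong refl) (subst complex_norm_square, simp add: mult.commute)
    finally show ?thesis unfolding nrm_def by simp
  qed
  have key': "Re (Bf n a w v) - M * Re (ip n w v) = nrm n w"
  proof -
    have "Re (Bf n a w v - complex_of_real M * ip n w v) = nrm n w" by (simp only: key Re_complex_of_real)
    thus ?thesis by simp
  qed
  define D where "D = Re (Bf n a w w) - M * nrm n w"
  have ineq: "2 * t * nrm n w + t^2 * D \<le> 0" for t :: real
  proof -
    define z where "z = (\<lambda>i. complex_of_real t * w i)"
    have "Re (Bf n a (\<lambda>i. v i + z i) (\<lambda>i. v i + z i)) \<le> M * nrm n (\<lambda>i. v i + z i)"
      using vmax M_def by blast
    moreover have "Bf n a (\<lambda>i. v i + z i) (\<lambda>i. v i + z i) = Bf n a v v + Bf n a v z + Bf n a z v + Bf n a z z"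
      by (rule Bf_add)
    moreover have "Bf n a v z = cnj (Bf n a z v)" using Bf_herm[OF herm, where n=n and z=v and y=z] by simp
    moreover have "Bf n a z v = complex_of_real t * Bf n a w v"
      using Bf_scale[where n=n and a=a and c="complex_of_real t" and y=w and d=1 and z=v] unfolding z_def by simp
    moreover have "Bf n a z z = complex_of_real (t^2) * Bf n a w w"
      using Bf_scale[where n=n and a=a and c="complex_of_real t" and y=w and d="complex_of_real t" and z=w] unfolding z_def
      by (simp add: power2_eq_square)
    moreover have "nrm n (\<lambda>i. v i + z i) = 1 + 2 * (t * Re (ip n w v)) + t^2 * nrm n w"
      unfolding nrm_add z_def ip_scale nrm_scale v1 by simp
    ultimately have "M + 2 * (t * Re (Bf n a w v)) + t^2 * Re (Bf n a w w) \<le> M * (1 + 2 * (t * Re (ip n w v)) + t^2 * nrm n w)"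
      using M_def by simp
    hence "2 * t * (Re (Bf n a w v) - M * Re (ip n w v)) + t^2 * D \<le> 0"
      unfolding D_def by (simp add: algebra_simps)
    thus ?thesis using key' by simp
  qed
  have "nrm n w = 0"
  proof (rule ccontr)
    assume "nrm n w \<noteq> 0"
    hence N: "nrm n w > 0" using nrm_nonneg[of n w] by linarith
    define t where "t = nrm n w / (\<bar>D\<bar> + 1)"
    have t: "t > 0" unfolding t_def using N by simp
    have "2 * t * nrm n w + t^2 * D \<le> 0" by (rule ineq)
    hence "t * (2 * nrm n w + t * D) \<le> 0" by (simp add: power2_eq_square algebra_simps)
    hence "2 * nrm n w + t * D \<le> 0" using t by (simp add: mult_le_0_iff)
    moreover have "t * \<bar>D\<bar> < nrm n w" unfolding t_def using N
      by (simp add: field_simps)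
    moreover have "- (t * D) \<le> t * \<bar>D\<bar>" using t by (simp add: abs_if)
    ultimately show False using N by linarith
  qed
  hence "w s = 0" using nrm_zero s by blast
  thus ?thesis unfolding w_def M_def by simp
qed

lemma three_bound:
  assumes herm: "\<And>s t. a t s = cnj (a s t)"
    and renn: "\<And>s t. Re (a s t) \<ge> 0"
    and bound: "\<forall>z. Re (Bf n a z z) \<le> M * nrm n z"
    and eig: "\<forall>s<n. (\<Sum>t<n. a s t * y t) = \<mu> * y s"
    and pos: "nrm n y > 0"
  shows "- Re \<mu> \<le> 3 * M"
proof -
  define N where "N = nrm n y"
  define P where "P = (\<Sum>s<n. \<Sum>t<n. Re (a s t) * Re (cnj (y s) * y t))"
  define R where "R = (\<Sum>s<n. \<Sum>t<n. Re (a s t) * (cmod (y s) * cmod (y t)))"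
  define r where "r = (\<lambda>i. complex_of_real (cmod (y i)))"
  define yb where "yb = (\<lambda>i. cnj (y i))"
  have Byy: "Bf n a y y = \<mu> * complex_of_real N"
  proof -
    have "Bf n a y y = (\<Sum>s<n. cnj (y s) * (\<Sum>t<n. a s t * y t))"
      unfolding Bf_def by (simp add: sum_distrib_left mult_ac)
    also have "\<dots> = (\<Sum>s<n. \<mu> * complex_of_real ((cmod (y s))^2))"
    proof (intro sum.cong refl)
      fix s assume "s \<in> {..<n}"
      hence "cnj (y s) * (\<Sum>t<n. a s t * y t) = \<mu> * (y s * cnj (y s))" using eig by simp
      thus "cnj (y s) * (\<Sum>t<n. a s t * y t) = \<mu> * complex_of_real ((cmod (y s))^2)"
        by (simp only: complex_norm_square)
    qed
    finally show ?thesis unfolding N_def nrm_def by (simp add: sum_distrib_left)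
  qed
  hence ReByy: "Re (Bf n a y y) = Re \<mu> * N" by simp
  have "Re (Bf n a r r) = R"
    unfolding Bf_def R_def r_def by (simp add: Re_sum mult_ac)
  moreover have "nrm n r = N" unfolding nrm_def N_def r_def by simp
  ultimately have h1: "R \<le> M * N" using bound by metis
  have "nrm n yb = N" unfolding nrm_def N_def yb_def by simp
  hence h2: "Re (Bf n a yb yb) \<le> M * N" using bound by metis
  have "Re (Bf n a yb yb) = (\<Sum>s<n. \<Sum>t<n. Re (cnj (y s) * a t s * y t))"
  proof -
    have "Re (Bf n a yb yb) = (\<Sum>s<n. \<Sum>t<n. Re (y s * a s t * cnj (y t)))"
      unfolding Bf_def yb_def by (simp add: Re_sum)
    also have "\<dots> = (\<Sum>s<n. \<Sum>t<n. Re (cnj (y s) * a t s * y t))"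
    proof (intro sum.cong refl)
      fix s t
      have "Re (y s * a s t * cnj (y t)) = Re (cnj (y s * a s t * cnj (y t)))" by (simp only: cnj.sel)
      also have "\<dots> = Re (cnj (y s) * a t s * y t)" by (simp add: herm[of s t])
      finally show "Re (y s * a s t * cnj (y t)) = Re (cnj (y s) * a t s * y t)" .
    qed
    finally show ?thesis .
  qed
  also have "\<dots> = (\<Sum>t<n. \<Sum>s<n. Re (cnj (y s) * a t s * y t))" by (rule sum.swap)
  finally have Ryb: "Re (Bf n a yb yb) = (\<Sum>s<n. \<Sum>t<n. Re (cnj (y t) * a s t * y s))" .
  have "Re (Bf n a yb yb) + Re (Bf n a y y) = (\<Sum>s<n. \<Sum>t<n. Re (cnj (y t) * a s t * y s) + Re (cnj (y s) * a s t * y t))"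
    unfolding Ryb by (simp add: Bf_def Re_sum sum.distrib)
  also have "\<dots> = 2 * P" unfolding P_def sum_distrib_left
  proof (intro sum.cong refl)
    fix s t
    have e: "cnj (y t) * y s = cnj (cnj (y s) * y t)" by simp
    have "Re (cnj (y t) * a s t * y s) + Re (cnj (y s) * a s t * y t)
        = Re (a s t * (cnj (y t) * y s + cnj (y s) * y t))" by (simp add: algebra_simps)
    also have "cnj (y t) * y s + cnj (y s) * y t = complex_of_real (2 * Re (cnj (y s) * y t))"
      by (simp add: complex_eq_iff algebra_simps)
    finally show "Re (cnj (y t) * a s t * y s) + Re (cnj (y s) * a s t * y t) = 2 * (Re (a s t) * Re (cnj (y s) * y t))"
      by simp
  qed
  finally have h3: "Re (Bf n a yb yb) = 2 * P - Re \<mu> * N" using ReByy by simp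
  have h4': "(\<Sum>s<n. \<Sum>t<n. - (Re (a s t) * Re (cnj (y s) * y t))) \<le> R" unfolding R_def
  proof (intro sum_mono)
    fix s t
    have "\<bar>Re (cnj (y s) * y t)\<bar> \<le> cmod (y s) * cmod (y t)"
      using abs_Re_le_cmod[of "cnj (y s) * y t"] by (simp add: norm_mult)
    hence "- Re (cnj (y s) * y t) \<le> cmod (y s) * cmod (y t)" by linarith
    from mult_left_mono[OF this renn[of s t]]
    show "- (Re (a s t) * Re (cnj (y s) * y t)) \<le> Re (a s t) * (cmod (y s) * cmod (y t))" by (simp only: mult_minus_right)
  qed
  have h4: "- P \<le> R" using h4' unfolding P_def by (simp add: sum_negf)
  have "- Re \<mu> * N \<le> 3 * M * N" using h1 h2 h3 h4 by linarith
  hence "(- Re \<mu>) * N \<le> (3 * M) * N" by simp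
  moreover have "N > 0" using pos N_def by simp
  ultimately show ?thesis using mult_le_cancel_right_pos by blast
qed

lemma gain_adj_carrier: "gain_adj n E \<phi> \<in> carrier_mat n n"
  unfolding gain_adj_def by simp

lemma gain_adj_mult:
  assumes "x \<in> carrier_vec n" "s < n"
  shows "(gain_adj n E \<phi> *\<^sub>v x) $ s = (\<Sum>t<n. (if E s t then \<phi> s t else 0) * x $ t)"
  using assms unfolding gain_adj_def
  by (simp add: mult_mat_vec_def scalar_prod_def atLeast0LessThan)

lemma eig_vec:
  assumes "eigenvalue (gain_adj n E \<phi>) \<mu>"
  shows "\<exists>y. nrm n y > 0 \<and> (\<forall>s<n. (\<Sum>t<n. (if E s t then \<phi> s t else 0) * y t) = \<mu> * y s)"
proof -
  obtain x where x: "x \<in> carrier_vec n" "x \<noteq> 0\<^sub>v n" "gain_adj n E \<phi> *\<^sub>v x = \<mu> \<cdot>\<^sub>v x"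
    using assms gain_adj_carrier[of n E \<phi>] unfolding eigenvalue_def eigenvector_def by auto
  define y where "y = (\<lambda>i. x $ i)"
  have "nrm n y \<noteq> 0"
  proof
    assume "nrm n y = 0"
    hence "x $ i = 0" if "i < n" for i using nrm_zero that unfolding y_def by blast
    hence "x = 0\<^sub>v n" using x(1) by (intro eq_vecI) auto
    with x(2) show False by simp
  qed
  hence "nrm n y > 0" using nrm_nonneg[of n y] by linarith
  moreover have "\<forall>s<n. (\<Sum>t<n. (if E s t then \<phi> s t else 0) * y t) = \<mu> * y s"
  proof (intro allI impI)
    fix s assume s: "s < n"
    have "(gain_adj n E \<phi> *\<^sub>v x) $ s = (\<mu> \<cdot>\<^sub>v x) $ s" using x(3) by simp
    moreover have "(\<mu> \<cdot>\<^sub>v x) $ s = \<mu> * x $ s" using s x(1) by simp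
    ultimately show "(\<Sum>t<n. (if E s t then \<phi> s t else 0) * y t) = \<mu> * y s"
      using gain_adj_mult[OF x(1) s] unfolding y_def by simp
  qed
  ultimately show ?thesis by blast
qed

lemma vec_eig:
  assumes "nrm n v = 1" "\<forall>s<n. (\<Sum>t<n. (if E s t then \<phi> s t else 0) * v t) = \<mu> * v s"
  shows "eigenvalue (gain_adj n E \<phi>) \<mu>"
proof -
  define x where "x = Matrix.vec n v"
  have xc: "x \<in> carrier_vec n" unfolding x_def by simp
  have "x \<noteq> 0\<^sub>v n"
  proof
    assume "x = 0\<^sub>v n"
    hence "v i = 0" if "i < n" for i using that unfolding x_def
      by (metis index_vec index_zero_vec(1))
    hence "nrm n v = 0" unfolding nrm_def by simp
    with assms(1) show False by simp
  qed
  moreover have "gain_adj n E \<phi> *\<^sub>v x = \<mu> \<cdot>\<^sub>v x"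
  proof (rule eq_vecI)
    fix s assume "s < dim_vec (\<mu> \<cdot>\<^sub>v x)"
    hence s: "s < n" using xc by simp
    have "(\<mu> \<cdot>\<^sub>v x) $ s = \<mu> * v s" using s unfolding x_def by simp
    moreover have "(\<Sum>t<n. (if E s t then \<phi> s t else 0) * x $ t) = (\<Sum>t<n. (if E s t then \<phi> s t else 0) * v t)"
      unfolding x_def by (intro sum.cong refl) simp
    ultimately show "(gain_adj n E \<phi> *\<^sub>v x) $ s = (\<mu> \<cdot>\<^sub>v x) $ s"
      unfolding gain_adj_mult[OF xc s] using assms(2) s by simp
  next
    show "dim_vec (gain_adj n E \<phi> *\<^sub>v x) = dim_vec (\<mu> \<cdot>\<^sub>v x)" using xc gain_adj_carrier[of n E \<phi>] by simp
  qed
  ultimately show ?thesis using xc gain_adj_carrier[of n E \<phi>]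
    unfolding eigenvalue_def eigenvector_def by auto
qed

theorem theorem5p1:
  fixes n :: nat and E :: "nat \<Rightarrow> nat \<Rightarrow> bool" and \<phi> :: "nat \<Rightarrow> nat \<Rightarrow> complex"
  assumes "connected_graph n E"
    and "T_gain E \<phi>"
    and "\<forall>s t. E s t \<longrightarrow> Re (\<phi> s t) \<ge> 0"
  shows "lambda1 (gain_adj n E \<phi>) \<le> spectral_radius (gain_adj n E \<phi>) \<and>
         spectral_radius (gain_adj n E \<phi>) \<le> 3 * lambda1 (gain_adj n E \<phi>)"
proof -
  define a where "a = (\<lambda>s t. if E s t then \<phi> s t else 0)"
  define A where "A = gain_adj n E \<phi>"
  have n: "n > 0" and sym: "\<And>s t. E s t \<Longrightarrow> E t s"
    using assms(1) unfolding connected_graph_def simple_graph_def by auto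
  have herm: "a t s = cnj (a s t)" for s t
  proof (cases "E s t")
    case True
    have "cmod (\<phi> s t) = 1" "\<phi> t s = inverse (\<phi> s t)" using assms(2) True unfolding T_gain_def by auto
    have "\<phi> s t * cnj (\<phi> s t) = 1" using complex_norm_square[of "\<phi> s t"] \<open>cmod (\<phi> s t) = 1\<close> by simp
    hence "inverse (\<phi> s t) = cnj (\<phi> s t)" by (rule inverse_unique)
    hence "\<phi> t s = cnj (\<phi> s t)" using \<open>\<phi> t s = inverse (\<phi> s t)\<close> by simp
    then show ?thesis using True sym[OF True] unfolding a_def by simp
  next
    case False
    moreover have "\<not> E t s" using False sym by blast
    ultimately show ?thesis unfolding a_def by simp
  qed
  have renn: "Re (a s t) \<ge> 0" for s t using assms(3) unfolding a_def by auto
  obtain v where v1: "nrm n v = 1" and vmax: "\<forall>y. Re (Bf n a y y) \<le> Re (Bf n a v v) * nrm n y"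
    using exists_max[OF n] by blast
  define M where "M = Re (Bf n a v v)"
  have "\<forall>s<n. (\<Sum>t<n. a s t * v t) = complex_of_real M * v s"
    using max_is_eig[OF herm v1 vmax] unfolding M_def by blast
  hence eigM: "eigenvalue A (complex_of_real M)" unfolding A_def
    using vec_eig[OF v1] unfolding a_def by blast
  have eigs: "Im \<mu> = 0 \<and> Re \<mu> \<le> M \<and> - Re \<mu> \<le> 3 * M" if mu0: "eigenvalue A \<mu>" for \<mu>
  proof -
    have "\<exists>y. nrm n y > 0 \<and> (\<forall>s<n. (\<Sum>t<n. a s t * y t) = \<mu> * y s)"
      using eig_vec[OF mu0[unfolded A_def]] unfolding a_def .
    then obtain y where pos: "nrm n y > 0" and ey: "\<forall>s<n. (\<Sum>t<n. a s t * y t) = \<mu> * y s"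
      by blast
    have "Bf n a y y = (\<Sum>s<n. cnj (y s) * (\<Sum>t<n. a s t * y t))"
      unfolding Bf_def by (simp add: sum_distrib_left mult_ac)
    also have "\<dots> = (\<Sum>s<n. \<mu> * complex_of_real ((cmod (y s))^2))"
    proof (intro sum.cong refl)
      fix s assume "s \<in> {..<n}"
      hence "cnj (y s) * (\<Sum>t<n. a s t * y t) = \<mu> * (y s * cnj (y s))" using ey by simp
      thus "cnj (y s) * (\<Sum>t<n. a s t * y t) = \<mu> * complex_of_real ((cmod (y s))^2)"
        by (simp only: complex_norm_square)
    qed
    also have "\<dots> = \<mu> * complex_of_real (nrm n y)" unfolding nrm_def by (simp add: sum_distrib_left)
    finally have B: "Bf n a y y = \<mu> * complex_of_real (nrm n y)" .
    have "cnj (Bf n a y y) = Bf n a y y" using Bf_herm[OF herm, where n=n and z=y and y=y] by simp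
    hence "Im (cnj (Bf n a y y)) = Im (Bf n a y y)" by simp
    hence "Im (Bf n a y y) = 0" by simp
    hence "Im (\<mu> * complex_of_real (nrm n y)) = 0" unfolding B .
    hence im: "Im \<mu> = 0" using pos by simp
    have "Re (Bf n a y y) = Re \<mu> * nrm n y" unfolding B by simp
    hence "Re \<mu> * nrm n y \<le> M * nrm n y" using vmax unfolding M_def by metis
    hence "Re \<mu> \<le> M" using pos by simp
    moreover have "- Re \<mu> \<le> 3 * M"
      using three_bound[OF herm renn _ ey pos, of M] vmax unfolding M_def by blast
    ultimately show ?thesis using im by blast
  qed
  have fin: "finite {x :: real. eigenvalue A (complex_of_real x)}"
  proof (rule finite_subset)
    show "{x :: real. eigenvalue A (complex_of_real x)} \<subseteq> Re ` spectrum A"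
      unfolding spectrum_def by (auto intro: image_eqI[where x="complex_of_real _"])
    show "finite (Re ` spectrum A)" using card_finite_spectrum(1)[OF gain_adj_carrier] unfolding A_def by simp
  qed
  have lam: "lambda1 A = M" unfolding lambda1_def
  proof (rule Max_eqI[OF fin])
    show "M \<in> {x. eigenvalue A (complex_of_real x)}" using eigM by simp
    fix x assume "x \<in> {x. eigenvalue A (complex_of_real x)}"
    thus "x \<le> M" using eigs[of "complex_of_real x"] by simp
  qed
  have Ac: "A \<in> carrier_mat n n" unfolding A_def by (rule gain_adj_carrier)
  have "norm (complex_of_real M) \<le> spectral_radius A"
    using spectral_radius_mem_max(2)[OF Ac n] eigM unfolding spectrum_def by blast
  hence h1: "M \<le> spectral_radius A" by simp
  obtain \<mu> where mu: "eigenvalue A \<mu>" "spectral_radius A = norm \<mu>"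
    using spectral_radius_mem_max(1)[OF Ac n] unfolding spectrum_def by auto
  have "norm \<mu> = \<bar>Re \<mu>\<bar>" using eigs[OF mu(1)] by (simp add: cmod_def)
  hence "spectral_radius A \<le> 3 * M" using eigs[OF mu(1)] mu(2) by linarith
  with h1 lam show ?thesis unfolding A_def by simp
qed

end
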